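(* Let $(K,d)$ be a compact metric space, let $\gamma=(\gamma_1,\dots,\gamma_n)$ be a system of proper contractions on $K$ with $K=\bigcup_{i=1}^n\gamma_i(K)$, and let $\varphi:K\to K$ be continuous with $\varphi(\gamma_i(x))=x$ for all $x\in K$ and all $i$. Assume $\gamma$ satisfies the open set condition and the measure separation condition in $K$. Let $a\in J(X)^0$ and let $\xi_1,\dots,\xi_m,\eta_1,\dots,\eta_m\in X=C(K)$ satisfy $\sum_{i=1}^m\theta_{\xi_i,\eta_i}=\phi(a)$. Then, as operators on $L^2(K,\mathcal B(K),\mu^H)$, \[\sum_{i=1}^m M_{\xi_i}C_\varphi C_\varphi^*M_{\eta_i}^*=M_a.\]
   Context: A continuous map $g:K\to K$ is a proper contraction if there are $0<c_1\le c_2<1$ with $c_1d(x,y)\le d(g(x),g(y))\le c_2d(x,y)$ for all $x,y$. Open set condition: there is a non-empty open $V\subset K$ with $\bigcup_i\gamma_i(V)\subset V$ and $\gamma_i(V)\cap\gamma_j(V)=\emptyset$ for $i\ne j$. For positive reals $p_1,\dots,p_n$ with $\sum p_i=1$, the self-similar measure is the unique Borel probability measure $\mu$ on $K$ with $\mu(E)=\sum_ip_i\mu(\gamma_i^{-1}(E))$ for all Borel $E$; the Hutchinson measure $\mu^H$ is the one with all $p_i=1/n$. Measure separation condition: $\mu(\gamma_i(K)\cap\gamma_j(K))=0$ for every self-similar measure $\mu$ and all $i\neq j$. $M_a$ denotes multiplication by $a$ on $L^2(K,\mathcal B(K),\mu^H)$, and $C_\varphi f=f\circ\varphi$ is the composition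 operator on $L^2(K,\mathcal B(K),\mu^H)$ (bounded under these assumptions). $B_\gamma=\{y\in K:y=\gamma_i(x)=\gamma_j(x)$ for some $x\in K$, $i\ne j\}$. $A=C(K)$, and $X=C(K)$ is the Hilbert bimodule over $A$ with $(a\cdot\xi\cdot b)(x)=a(x)\xi(x)b(\varphi(x))$, inner product $\langle\xi,\eta\rangle_A(x)=\frac1n\sum_{i=1}^n\overline{\xi(\gamma_i(x))}\eta(\gamma_i(x))$, left action $(\phi(a)\xi)(x)=a(x)\xi(x)$; $\theta_{\xi,\eta}(\zeta)=\xi\cdot\langle\eta,\zeta\rangle_A$. $J(X)^0$ is the set of $a\in A$ vanishing on $B_\gamma$ with compact support contained in $K\setminus B_\gamma$. *)

theory Defs
  imports "HOL-Probability.Probability"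
begin

definition proper_contraction :: "'a::metric_space set \<Rightarrow> ('a \<Rightarrow> 'a) \<Rightarrow> bool" where
  "proper_contraction K g \<longleftrightarrow> g ` K \<subseteq> K \<and> continuous_on K g \<and>
     (\<exists>c1 c2::real. 0 < c1 \<and> c1 \<le> c2 \<and> c2 < 1 \<and>
        (\<forall>x\<in>K. \<forall>y\<in>K. c1 * dist x y \<le> dist (g x) (g y) \<and> dist (g x) (g y) \<le> c2 * dist x y))"

definition open_set_condition :: "'a::metric_space set \<Rightarrow> nat \<Rightarrow> (nat \<Rightarrow> 'a \<Rightarrow> 'a) \<Rightarrow> bool" where
  "open_set_condition K n \<gamma> \<longleftrightarrow>
     (\<exists>V. openin (top_of_set K) V \<and> V \<noteq> {} \<and> (\<Union>i<n. \<gamma> i ` V) \<subseteq> V \<and>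
        (\<forall>i<n. \<forall>j<n. i \<noteq> j \<longrightarrow> \<gamma> i ` V \<inter> \<gamma> j ` V = {}))"

definition self_similar_measure ::
  "'a::metric_space set \<Rightarrow> nat \<Rightarrow> (nat \<Rightarrow> 'a \<Rightarrow> 'a) \<Rightarrow> (nat \<Rightarrow> real) \<Rightarrow> 'a measure \<Rightarrow> bool" where
  "self_similar_measure K n \<gamma> p \<mu> \<longleftrightarrow>
     prob_space \<mu> \<and> sets \<mu> = sets (restrict_space borel K) \<and>
     (\<forall>E\<in>sets \<mu>. measure \<mu> E = (\<Sum>i<n. p i * measure \<mu> (\<gamma> i -` E \<inter> K)))"

definition measure_separation_condition :: "'a::metric_space set \<Rightarrow> nat \<Rightarrow> (nat \<Rightarrow> 'a \<Rightarrow> 'a) \<Rightarrow> bool" where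
  "measure_separation_condition K n \<gamma> \<longleftrightarrow>
     (\<forall>p \<mu>. (\<forall>i<n. 0 < p i) \<and> (\<Sum>i<n. p i) = 1 \<and> self_similar_measure K n \<gamma> p \<mu> \<longrightarrow>
        (\<forall>i<n. \<forall>j<n. i \<noteq> j \<longrightarrow> measure \<mu> (\<gamma> i ` K \<inter> \<gamma> j ` K) = 0))"

definition hutchinson_measure :: "'a::metric_space set \<Rightarrow> nat \<Rightarrow> (nat \<Rightarrow> 'a \<Rightarrow> 'a) \<Rightarrow> 'a measure \<Rightarrow> bool" where
  "hutchinson_measure K n \<gamma> \<mu> \<longleftrightarrow> self_similar_measure K n \<gamma> (\<lambda>_. 1 / real n) \<mu>"

definition branch_set :: "'a set \<Rightarrow> nat \<Rightarrow> (nat \<Rightarrow> 'a \<Rightarrow> 'a) \<Rightarrow> 'a set" where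
  "branch_set K n \<gamma> = {y\<in>K. \<exists>x\<in>K. \<exists>i<n. \<exists>j<n. i \<noteq> j \<and> y = \<gamma> i x \<and> y = \<gamma> j x}"

definition JX0 :: "'a::metric_space set \<Rightarrow> nat \<Rightarrow> (nat \<Rightarrow> 'a \<Rightarrow> 'a) \<Rightarrow> ('a \<Rightarrow> complex) set" where
  "JX0 K n \<gamma> = {a. continuous_on K a \<and> (\<forall>y\<in>branch_set K n \<gamma>. a y = 0) \<and>
      compact (K \<inter> closure {x\<in>K. a x \<noteq> 0}) \<and>
      K \<inter> closure {x\<in>K. a x \<noteq> 0} \<subseteq> K - branch_set K n \<gamma>}"

definition bimod_inner :: "nat \<Rightarrow> (nat \<Rightarrow> 'a \<Rightarrow> 'a) \<Rightarrow> ('a \<Rightarrow> complex) \<Rightarrow> ('a \<Rightarrow> complex) \<Rightarrow> 'a \<Rightarrow> complex" where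
  "bimod_inner n \<gamma> \<xi> \<eta> x = (1 / of_nat n) * (\<Sum>i<n. cnj (\<xi> (\<gamma> i x)) * \<eta> (\<gamma> i x))"

definition right_act :: "('a \<Rightarrow> 'a) \<Rightarrow> ('a \<Rightarrow> complex) \<Rightarrow> ('a \<Rightarrow> complex) \<Rightarrow> 'a \<Rightarrow> complex" where
  "right_act \<phi> \<xi> b x = \<xi> x * b (\<phi> x)"

definition theta :: "nat \<Rightarrow> (nat \<Rightarrow> 'a \<Rightarrow> 'a) \<Rightarrow> ('a \<Rightarrow> 'a) \<Rightarrow> ('a \<Rightarrow> complex) \<Rightarrow> ('a \<Rightarrow> complex)
    \<Rightarrow> ('a \<Rightarrow> complex) \<Rightarrow> 'a \<Rightarrow> complex" where
  "theta n \<gamma> \<phi> \<xi> \<eta> \<zeta> = right_act \<phi> \<xi> (bimod_inner n \<gamma> \<eta> \<zeta>)"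

definition left_act :: "('a \<Rightarrow> complex) \<Rightarrow> ('a \<Rightarrow> complex) \<Rightarrow> 'a \<Rightarrow> complex" where
  "left_act a \<xi> x = a x * \<xi> x"

text \<open>Square-integrable complex functions (representatives of L^2 classes).\<close>
definition L2 :: "'a measure \<Rightarrow> ('a \<Rightarrow> complex) set" where
  "L2 \<mu> = {f. f \<in> borel_measurable \<mu> \<and> integrable \<mu> (\<lambda>x. (cmod (f x))\<^sup>2)}"

definition L2_inner :: "'a measure \<Rightarrow> ('a \<Rightarrow> complex) \<Rightarrow> ('a \<Rightarrow> complex) \<Rightarrow> complex" where
  "L2_inner \<mu> f g = (\<integral>x. f x * cnj (g x) \<partial>\<mu>)"

text \<open>T is (a representative of) the Hilbert space adjoint of the composition operator C_phi.\<close>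
definition is_comp_adjoint :: "'a measure \<Rightarrow> ('a \<Rightarrow> 'a) \<Rightarrow> (('a \<Rightarrow> complex) \<Rightarrow> ('a \<Rightarrow> complex)) \<Rightarrow> bool" where
  "is_comp_adjoint \<mu> \<phi> T \<longleftrightarrow>
     (\<forall>g\<in>L2 \<mu>. T g \<in> L2 \<mu>) \<and>
     (\<forall>f\<in>L2 \<mu>. \<forall>g\<in>L2 \<mu>. L2_inner \<mu> (\<lambda>x. f (\<phi> x)) g = L2_inner \<mu> f (T g))"

end

theory Submission
  imports Defs
begin

lemma interp:
  fixes P :: "'a::metric_space set" and h :: "'a \<Rightarrow> complex"
  assumes "finite P"
  shows "\<exists>\<zeta>. continuous_on UNIV \<zeta> \<and> (\<forall>p\<in>P. \<zeta> p = h p)"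
proof -
  define \<zeta> where "\<zeta> = (\<lambda>y. \<Sum>q\<in>P. h q * (\<Prod>p\<in>P-{q}. complex_of_real (dist y p / dist q p)))"
  have "continuous_on UNIV \<zeta>" unfolding \<zeta>_def by (intro continuous_intros) auto
  moreover have "\<zeta> p0 = h p0" if p0: "p0 \<in> P" for p0
  proof -
    have "\<zeta> p0 = h p0 * (\<Prod>p\<in>P-{p0}. complex_of_real (dist p0 p / dist p0 p)) +
        (\<Sum>q\<in>P-{p0}. h q * (\<Prod>p\<in>P-{q}. complex_of_real (dist p0 p / dist q p)))"
      unfolding \<zeta>_def by (rule sum.remove[OF assms p0])
    also have "(\<Prod>p\<in>P-{p0}. complex_of_real (dist p0 p / dist p0 p)) = 1"
      by (intro prod.neutral) auto
    also have "(\<Sum>q\<in>P-{p0}. h q * (\<Prod>p\<in>P-{q}. complex_of_real (dist p0 p / dist q p))) = 0"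
    proof (intro sum.neutral ballI)
      fix q assume q: "q \<in> P - {p0}"
      have "(\<Prod>p\<in>P-{q}. complex_of_real (dist p0 p / dist q p)) = 0"
        using assms p0 q by (intro prod_zero) auto
      then show "h q * (\<Prod>p\<in>P-{q}. complex_of_real (dist p0 p / dist q p)) = 0" by simp
    qed
    finally show ?thesis by simp
  qed
  ultimately show ?thesis by blast
qed


lemma cnj_meas[measurable]: "g \<in> borel_measurable M \<Longrightarrow> (\<lambda>x. cnj (g x)) \<in> borel_measurable M"
  by (rule borel_measurable_continuous_on[where f=cnj]) (auto intro: continuous_intros)

lemma sq_sum_le: fixes a b :: real shows "(a+b)^2 \<le> 2*a^2+2*b^2"
proof -
  have "0 \<le> (a - b)^2" by simp
  then show ?thesis by (simp add: power2_eq_square algebra_simps)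
qed

lemma prod_le_sq: fixes a b :: real assumes "0\<le>a" "0\<le>b" shows "a*b \<le> a^2+b^2"
proof -
  have "0 \<le> (a - b)^2" by simp
  then have "2*(a*b) \<le> a^2+b^2" by (simp add: power2_eq_square algebra_simps)
  moreover have "0 \<le> a*b" using assms by simp
  ultimately show ?thesis by linarith
qed

locale ssm =
  fixes K :: "'a::metric_space set" and n :: nat and \<gamma> :: "nat \<Rightarrow> 'a \<Rightarrow> 'a" and \<mu> :: "'a measure"
  assumes prob: "prob_space \<mu>"
  and sets_eq: "sets \<mu> = sets (restrict_space borel K)"
  and npos: "0 < n"
  and gmeas: "\<And>i. i < n \<Longrightarrow> \<gamma> i \<in> measurable \<mu> \<mu>"
  and ident: "\<And>E. E \<in> sets \<mu> \<Longrightarrow> measure \<mu> E = (\<Sum>i<n. 1 / real n * measure \<mu> (\<gamma> i -` E \<inter> K))"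
begin

lemma space_eq: "space \<mu> = K"
  using sets_eq_imp_space_eq[OF sets_eq] by (simp add: space_restrict_space)

lemma emeas: "A \<in> sets \<mu> \<Longrightarrow> emeasure \<mu> A = ennreal (measure \<mu> A)"
  using finite_measure.emeasure_eq_measure[OF prob_space.axioms(1)[OF prob]] by blast

lemma gK: "i < n \<Longrightarrow> x \<in> K \<Longrightarrow> \<gamma> i x \<in> K"
  using measurable_space[OF gmeas] space_eq by blast

lemma nn:
  assumes "f \<in> borel_measurable \<mu>"
  shows "integral\<^sup>N \<mu> f = ennreal (1 / real n) * (\<Sum>i<n. \<integral>\<^sup>+x. f (\<gamma> i x) \<partial>\<mu>)"
  using assms
proof (induction rule: borel_measurable_induct)
  case (cong f g)
  have "integral\<^sup>N \<mu> f = integral\<^sup>N \<mu> g" using cong by (intro nn_integral_cong) auto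
  moreover have "(\<integral>\<^sup>+x. f (\<gamma> i x) \<partial>\<mu>) = (\<integral>\<^sup>+x. g (\<gamma> i x) \<partial>\<mu>)" if "i < n" for i
    using cong that measurable_space[OF gmeas[OF that]] by (intro nn_integral_cong) auto
  ultimately show ?case using cong by simp
next
  case (set A)
  have e: "(\<integral>\<^sup>+x. indicator A (\<gamma> i x) \<partial>\<mu>) = ennreal (measure \<mu> (\<gamma> i -` A \<inter> K))" if "i < n" for i
  proof -
    have "(\<integral>\<^sup>+x. indicator A (\<gamma> i x) \<partial>\<mu>) = (\<integral>\<^sup>+x. indicator (\<gamma> i -` A \<inter> space \<mu>) x \<partial>\<mu>)"
      by (intro nn_integral_cong) (auto simp: indicator_def)
    also have "\<dots> = emeasure \<mu> (\<gamma> i -` A \<inter> space \<mu>)"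
      using measurable_sets[OF gmeas[OF that] set] by simp
    finally show ?thesis using emeas measurable_sets[OF gmeas[OF that] set] space_eq by simp
  qed
  have "integral\<^sup>N \<mu> (indicator A) = ennreal (\<Sum>i<n. 1 / real n * measure \<mu> (\<gamma> i -` A \<inter> K))"
    using set emeas ident by simp
  also have "\<dots> = ennreal (1 / real n) * ennreal (\<Sum>i<n. (measure \<mu> (\<gamma> i -` A \<inter> K)))"
    by (subst ennreal_mult[symmetric]) (auto simp: sum_distrib_left intro!: sum_nonneg)
  also have "\<dots> = ennreal (1 / real n) * (\<Sum>i<n. ennreal (measure \<mu> (\<gamma> i -` A \<inter> K)))"
    by simp
  finally show ?case using e by simp
next
  case (mult u c)
  have "(\<integral>\<^sup>+x. c * u (\<gamma> i x) \<partial>\<mu>) = c * (\<integral>\<^sup>+x. u (\<gamma> i x) \<partial>\<mu>)" if "i < n" for i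
    using mult by (intro nn_integral_cmult measurable_compose[OF gmeas[OF that]])
  then show ?case using mult
    by (simp add: nn_integral_cmult sum_distrib_left algebra_simps)
next
  case (add u v)
  have "(\<integral>\<^sup>+x. v (\<gamma> i x) + u (\<gamma> i x) \<partial>\<mu>) = (\<integral>\<^sup>+x. v (\<gamma> i x) \<partial>\<mu>) + (\<integral>\<^sup>+x. u (\<gamma> i x) \<partial>\<mu>)" if "i < n" for i
    using add by (intro nn_integral_add measurable_compose[OF gmeas[OF that]])
  then show ?case using add
    by (simp add: nn_integral_add sum.distrib distrib_left)
next
  case (seq U)
  have incU: "\<And>m k y. m \<le> k \<Longrightarrow> U m y \<le> U k y" using \<open>incseq U\<close> by (auto simp: incseq_def le_fun_def)
  have Um: "\<And>i. U i \<in> borel_measurable \<mu>" using seq by blast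
  have m: "\<And>i j. j < n \<Longrightarrow> (\<lambda>x. U i (\<gamma> j x)) \<in> borel_measurable \<mu>"
    by (rule measurable_compose[OF gmeas Um])
  have inc: "\<And>j. j < n \<Longrightarrow> incseq (\<lambda>i x. U i (\<gamma> j x))"
    using \<open>incseq U\<close> unfolding incseq_def le_fun_def by blast
  have l: "integral\<^sup>N \<mu> (SUP i. U i) = (SUP i. integral\<^sup>N \<mu> (U i))"
    using nn_integral_monotone_convergence_SUP[OF \<open>incseq U\<close> seq(1)] by (simp add: SUP_apply[abs_def])
  have r: "(\<integral>\<^sup>+x. (SUP i. U i) (\<gamma> j x) \<partial>\<mu>) = (SUP i. \<integral>\<^sup>+x. U i (\<gamma> j x) \<partial>\<mu>)" if "j < n" for j
    using nn_integral_monotone_convergence_SUP[OF inc[OF that] m[OF that]] by (simp add: SUP_apply image_comp)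
  have "(\<Sum>j<n. SUP i. \<integral>\<^sup>+x. U i (\<gamma> j x) \<partial>\<mu>) = (SUP i. \<Sum>j<n. \<integral>\<^sup>+x. U i (\<gamma> j x) \<partial>\<mu>)"
    by (rule ennreal_SUP_sum[symmetric]) (auto intro!: incU nn_integral_mono simp: incseq_def)
  note su = this
  have IH: "\<And>i. integral\<^sup>N \<mu> (U i) = ennreal (1 / real n) * (\<Sum>j<n. \<integral>\<^sup>+x. U i (\<gamma> j x) \<partial>\<mu>)"
    using seq by blast
  have "integral\<^sup>N \<mu> (SUP i. U i) = (SUP i. ennreal (1 / real n) * (\<Sum>j<n. \<integral>\<^sup>+x. U i (\<gamma> j x) \<partial>\<mu>))"
    using l IH by simp
  also have "\<dots> = ennreal (1 / real n) * (SUP i. (\<Sum>j<n. \<integral>\<^sup>+x. U i (\<gamma> j x) \<partial>\<mu>))"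
    by (simp add: SUP_mult_left_ennreal)
  also have "\<dots> = ennreal (1 / real n) * (\<Sum>j<n. \<integral>\<^sup>+x. (SUP i. U i) (\<gamma> j x) \<partial>\<mu>)"
    using su r by simp
  finally show ?case .
qed


lemma integrable_comp:
  fixes F :: "'a \<Rightarrow> 'b::{banach, second_countable_topology}"
  assumes F: "integrable \<mu> F" and i: "i < n"
  shows "integrable \<mu> (\<lambda>x. F (\<gamma> i x))"
  unfolding integrable_iff_bounded
proof
  show "(\<lambda>x. F (\<gamma> i x)) \<in> borel_measurable \<mu>"
    by (rule measurable_compose[OF gmeas[OF i] borel_measurable_integrable[OF F]])
  have "(\<integral>\<^sup>+x. ennreal (norm (F x)) \<partial>\<mu>) < \<infinity>" using F unfolding integrable_iff_bounded by blast
  moreover have "(\<integral>\<^sup>+x. ennreal (norm (F x)) \<partial>\<mu>) = ennreal (1 / real n) * (\<Sum>j<n. \<integral>\<^sup>+x. ennreal (norm (F (\<gamma> j x))) \<partial>\<mu>)"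
    using F by (intro nn) auto
  ultimately show "(\<integral>\<^sup>+x. ennreal (norm (F (\<gamma> i x))) \<partial>\<mu>) < \<infinity>"
    using i npos by (auto simp: ennreal_mult_eq_top_iff top.not_eq_extremum[symmetric])
qed

lemma int_formula:
  fixes F :: "'a \<Rightarrow> 'b::{banach, second_countable_topology}"
  assumes "integrable \<mu> F"
  shows "integral\<^sup>L \<mu> F = (1 / real n) *\<^sub>R (\<Sum>i<n. \<integral>x. F (\<gamma> i x) \<partial>\<mu>)"
  using assms
proof (induction rule: integrable_induct)
  case (base A c)
  have e: "(\<integral>x. indicator A (\<gamma> i x) *\<^sub>R c \<partial>\<mu>) = measure \<mu> (\<gamma> i -` A \<inter> K) *\<^sub>R c" if "i < n" for i
  proof -
    have "(\<integral>x. indicator A (\<gamma> i x) *\<^sub>R c \<partial>\<mu>) = (\<integral>x. indicator (\<gamma> i -` A \<inter> space \<mu>) x *\<^sub>R c \<partial>\<mu>)"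
      by (rule Bochner_Integration.integral_cong) (auto simp: indicator_def)
    also have "\<dots> = measure \<mu> (\<gamma> i -` A \<inter> space \<mu>) *\<^sub>R c"
      using measurable_sets[OF gmeas[OF that] base(1)] emeas by simp
    finally show ?thesis using space_eq by simp
  qed
  have "(\<integral>x. indicator A x *\<^sub>R c \<partial>\<mu>) = measure \<mu> A *\<^sub>R c"
    using base emeas by simp
  also have "\<dots> = (\<Sum>i<n. 1 / real n * measure \<mu> (\<gamma> i -` A \<inter> K)) *\<^sub>R c"
    using ident[OF base(1)] by simp
  also have "\<dots> = (1 / real n) *\<^sub>R (\<Sum>i<n. measure \<mu> (\<gamma> i -` A \<inter> K) *\<^sub>R c)"
    by (simp add: scaleR_sum_left scaleR_sum_right)
  finally show ?case using e by simp
next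
  case (add f g)
  then show ?case
    by (simp add: integrable_comp sum.distrib scaleR_add_right)
next
  case (lim f s)
  have w: "integrable \<mu> (\<lambda>x. 2 * norm (f x))" using lim by auto
  have L: "(\<lambda>k. integral\<^sup>L \<mu> (s k)) \<longlonglongrightarrow> integral\<^sup>L \<mu> f"
    by (rule integral_dominated_convergence[OF _ _ w]) (use lim in auto)
  have R: "(\<lambda>k. \<integral>x. s k (\<gamma> j x) \<partial>\<mu>) \<longlonglongrightarrow> (\<integral>x. f (\<gamma> j x) \<partial>\<mu>)" if j: "j < n" for j
  proof (rule integral_dominated_convergence[where w="\<lambda>x. 2 * norm (f (\<gamma> j x))"])
    show "(\<lambda>x. f (\<gamma> j x)) \<in> borel_measurable \<mu>"
      by (rule borel_measurable_integrable, rule integrable_comp[OF _ j]) (use lim in auto)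
    show "\<And>k. (\<lambda>x. s k (\<gamma> j x)) \<in> borel_measurable \<mu>"
      by (rule borel_measurable_integrable, rule integrable_comp[OF _ j]) (use lim in auto)
    show "integrable \<mu> (\<lambda>x. 2 * norm (f (\<gamma> j x)))" using integrable_comp[OF _ j] lim by auto
    show "AE x in \<mu>. (\<lambda>k. s k (\<gamma> j x)) \<longlonglongrightarrow> f (\<gamma> j x)"
      using lim measurable_space[OF gmeas[OF j]] by auto
    show "\<And>k. AE x in \<mu>. norm (s k (\<gamma> j x)) \<le> 2 * norm (f (\<gamma> j x))"
      using lim measurable_space[OF gmeas[OF j]] by auto
  qed
  have "(\<lambda>k. (1 / real n) *\<^sub>R (\<Sum>j<n. \<integral>x. s k (\<gamma> j x) \<partial>\<mu>)) \<longlonglongrightarrow> (1 / real n) *\<^sub>R (\<Sum>j<n. \<integral>x. f (\<gamma> j x) \<partial>\<mu>)"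
    by (intro tendsto_scaleR tendsto_const tendsto_sum R) simp
  then have "(\<lambda>k. integral\<^sup>L \<mu> (s k)) \<longlonglongrightarrow> (1 / real n) *\<^sub>R (\<Sum>j<n. \<integral>x. f (\<gamma> j x) \<partial>\<mu>)"
    using lim by simp
  then show ?case using L LIMSEQ_unique by blast
qed


lemma L2_add: assumes "f \<in> L2 \<mu>" "g \<in> L2 \<mu>" shows "(\<lambda>x. f x + g x) \<in> L2 \<mu>"
proof -
  have fm: "f \<in> borel_measurable \<mu>" and gm: "g \<in> borel_measurable \<mu>"
    and fi: "integrable \<mu> (\<lambda>x. (cmod (f x))\<^sup>2)" and gi: "integrable \<mu> (\<lambda>x. (cmod (g x))\<^sup>2)"
    using assms by (auto simp: L2_def)
  have I: "integrable \<mu> (\<lambda>x. 2 * (cmod (f x))\<^sup>2 + 2 * (cmod (g x))\<^sup>2)"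
    using fi gi by (intro Bochner_Integration.integrable_add integrable_mult_right)
  have B: "norm ((cmod (f x + g x))\<^sup>2) \<le> norm (2 * (cmod (f x))\<^sup>2 + 2 * (cmod (g x))\<^sup>2)" for x
  proof -
    have "cmod (f x + g x) \<le> cmod (f x) + cmod (g x)" by (rule norm_triangle_ineq)
    then have "(cmod (f x + g x))\<^sup>2 \<le> (cmod (f x) + cmod (g x))\<^sup>2"
      by (intro power_mono) auto
    also have "\<dots> \<le> 2 * (cmod (f x))\<^sup>2 + 2 * (cmod (g x))\<^sup>2"
      by (rule sq_sum_le)
    finally show ?thesis by simp
  qed
  have M: "(\<lambda>x. (cmod (f x + g x))\<^sup>2) \<in> borel_measurable \<mu>" using fm gm by measurable
  have "integrable \<mu> (\<lambda>x. (cmod (f x + g x))\<^sup>2)"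
    by (rule Bochner_Integration.integrable_bound[OF I M]) (intro AE_I2 B)
  moreover have "(\<lambda>x. f x + g x) \<in> borel_measurable \<mu>" using fm gm by measurable
  ultimately show ?thesis unfolding L2_def by blast
qed

lemma L2_bmult: assumes "g \<in> L2 \<mu>" "b \<in> borel_measurable \<mu>" "\<And>x. x \<in> space \<mu> \<Longrightarrow> cmod (b x) \<le> B"
  shows "(\<lambda>x. b x * g x) \<in> L2 \<mu>"
proof -
  have gm: "g \<in> borel_measurable \<mu>" and gi: "integrable \<mu> (\<lambda>x. (cmod (g x))\<^sup>2)"
    using assms by (auto simp: L2_def)
  have I: "integrable \<mu> (\<lambda>x. B\<^sup>2 * (cmod (g x))\<^sup>2)"
    using gi by (rule integrable_mult_right)
  have B: "norm ((cmod (b x * g x))\<^sup>2) \<le> norm (B\<^sup>2 * (cmod (g x))\<^sup>2)" if "x \<in> space \<mu>" for x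
  proof -
    have "(cmod (b x))\<^sup>2 \<le> B\<^sup>2" using assms(3)[OF that]
      by (intro power_mono) auto
    then show ?thesis by (simp add: norm_mult power_mult_distrib mult_right_mono)
  qed
  have M: "(\<lambda>x. (cmod (b x * g x))\<^sup>2) \<in> borel_measurable \<mu>" using gm assms(2) by measurable
  have "integrable \<mu> (\<lambda>x. (cmod (b x * g x))\<^sup>2)"
    by (rule Bochner_Integration.integrable_bound[OF I M]) (intro AE_I2 B impI)
  moreover have "(\<lambda>x. b x * g x) \<in> borel_measurable \<mu>" using gm assms(2) by measurable
  ultimately show ?thesis unfolding L2_def by blast
qed

lemma L2_cmult: assumes "g \<in> L2 \<mu>" shows "(\<lambda>x. c * g x) \<in> L2 \<mu>"
  using L2_bmult[OF assms, of "\<lambda>_. c" "cmod c"] by simp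

lemma L2_sum: assumes "\<And>i. i \<in> I \<Longrightarrow> g i \<in> L2 \<mu>" shows "(\<lambda>x. \<Sum>i\<in>I. g i x) \<in> L2 \<mu>"
  using assms
proof (induction I rule: infinite_finite_induct)
  case (infinite A) then show ?case by (simp add: L2_def)
next
  case empty then show ?case by (simp add: L2_def)
next
  case (insert a A) then show ?case by (simp add: L2_add)
qed

lemma L2_prod: assumes "f \<in> L2 \<mu>" "g \<in> L2 \<mu>" shows "integrable \<mu> (\<lambda>x. f x * cnj (g x))"
proof -
  have fm: "f \<in> borel_measurable \<mu>" and gm: "g \<in> borel_measurable \<mu>"
    and fi: "integrable \<mu> (\<lambda>x. (cmod (f x))\<^sup>2)" and gi: "integrable \<mu> (\<lambda>x. (cmod (g x))\<^sup>2)"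
    using assms by (auto simp: L2_def)
  have I: "integrable \<mu> (\<lambda>x. (cmod (f x))\<^sup>2 + (cmod (g x))\<^sup>2)"
    using fi gi by (rule Bochner_Integration.integrable_add)
  have B: "norm (f x * cnj (g x)) \<le> norm ((cmod (f x))\<^sup>2 + (cmod (g x))\<^sup>2)" for x
  proof -
    have "cmod (f x) * cmod (g x) \<le> (cmod (f x))\<^sup>2 + (cmod (g x))\<^sup>2"
      by (rule prod_le_sq) auto
    then show ?thesis by (simp add: norm_mult)
  qed
  have M: "(\<lambda>x. f x * cnj (g x)) \<in> borel_measurable \<mu>" using fm gm by measurable
  show ?thesis
    by (rule Bochner_Integration.integrable_bound[OF I M]) (intro AE_I2 B)
qed

lemma L2_comp: assumes "g \<in> L2 \<mu>" "i < n" shows "(\<lambda>x. g (\<gamma> i x)) \<in> L2 \<mu>"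
proof -
  have gm: "g \<in> borel_measurable \<mu>" and gi: "integrable \<mu> (\<lambda>x. (cmod (g x))\<^sup>2)"
    using assms by (auto simp: L2_def)
  show ?thesis unfolding L2_def
    using measurable_compose[OF gmeas[OF assms(2)] gm] integrable_comp[OF gi assms(2)] by simp
qed

end

locale ssm_phi = ssm +
  fixes \<phi> :: "'a::metric_space \<Rightarrow> 'a"
  assumes phimeas: "\<phi> \<in> measurable \<mu> \<mu>"
  and phig: "\<And>i x. i < n \<Longrightarrow> x \<in> K \<Longrightarrow> \<phi> (\<gamma> i x) = x"
begin

lemma distr_phi: "distr \<mu> \<mu> \<phi> = \<mu>"
proof (rule measure_eqI)
  show "sets (distr \<mu> \<mu> \<phi>) = sets \<mu>" by simp
  fix A assume "A \<in> sets (distr \<mu> \<mu> \<phi>)"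
  then have A: "A \<in> sets \<mu>" by simp
  have B: "\<phi> -` A \<inter> K \<in> sets \<mu>" using measurable_sets[OF phimeas A] space_eq by simp
  have AK: "A \<subseteq> K" using sets.sets_into_space[OF A] space_eq by simp
  have eq: "\<gamma> i -` (\<phi> -` A \<inter> K) \<inter> K = A" if "i < n" for i
    using AK gK[OF that] phig[OF that] by auto
  have "emeasure (distr \<mu> \<mu> \<phi>) A = emeasure \<mu> (\<phi> -` A \<inter> K)"
    using emeasure_distr[OF phimeas A] space_eq by simp
  also have "\<dots> = ennreal (\<Sum>i<n. 1 / real n * measure \<mu> A)"
    using emeas[OF B] ident[OF B] eq by simp
  also have "\<dots> = emeasure \<mu> A" using npos emeas[OF A] by simp
  finally show "emeasure (distr \<mu> \<mu> \<phi>) A = emeasure \<mu> A" .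
qed

lemma AE_phi: assumes "AE y in \<mu>. P y" "{y \<in> space \<mu>. P y} \<in> sets \<mu>"
  shows "AE x in \<mu>. P (\<phi> x)"
  using AE_distr_iff[OF phimeas assms(2)] assms(1) distr_phi by metis

lemma L2_phi: assumes "f \<in> L2 \<mu>" shows "(\<lambda>x. f (\<phi> x)) \<in> L2 \<mu>"
proof -
  have fm: "f \<in> borel_measurable \<mu>" and fi: "integrable \<mu> (\<lambda>x. (cmod (f x))\<^sup>2)"
    using assms by (auto simp: L2_def)
  have "integrable \<mu> (\<lambda>x. (cmod (f (\<phi> x)))\<^sup>2)"
    using integrable_distr_eq[OF phimeas, of "\<lambda>x. (cmod (f x))\<^sup>2"] fm fi distr_phi by simp
  then show ?thesis unfolding L2_def
    using measurable_compose[OF phimeas fm] by simp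
qed

lemma adj:
  assumes adjT: "is_comp_adjoint \<mu> \<phi> T" and g: "g \<in> L2 \<mu>"
  shows "AE x in \<mu>. T g x = (1 / of_nat n) * (\<Sum>j<n. g (\<gamma> j x))"
proof -
  define S where "S = (\<lambda>x. (1 / of_nat n :: complex) * (\<Sum>j<n. g (\<gamma> j x)))"
  have SL2: "S \<in> L2 \<mu>" unfolding S_def
    by (intro L2_cmult L2_sum L2_comp g) auto
  have TL2: "T g \<in> L2 \<mu>" using adjT g unfolding is_comp_adjoint_def by blast
  have key: "L2_inner \<mu> f (T g) = L2_inner \<mu> f S" if f: "f \<in> L2 \<mu>" for f
  proof -
    have "L2_inner \<mu> f (T g) = (\<integral>x. f (\<phi> x) * cnj (g x) \<partial>\<mu>)"
      using adjT f g unfolding is_comp_adjoint_def L2_inner_def by metis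
    also have "\<dots> = (1 / real n) *\<^sub>R (\<Sum>j<n. \<integral>x. f (\<phi> (\<gamma> j x)) * cnj (g (\<gamma> j x)) \<partial>\<mu>)"
      by (rule int_formula[OF L2_prod[OF L2_phi[OF f] g]])
    also have "\<dots> = (1 / real n) *\<^sub>R (\<Sum>j<n. \<integral>x. f x * cnj (g (\<gamma> j x)) \<partial>\<mu>)"
    proof -
      have "(\<integral>x. f (\<phi> (\<gamma> j x)) * cnj (g (\<gamma> j x)) \<partial>\<mu>) = (\<integral>x. f x * cnj (g (\<gamma> j x)) \<partial>\<mu>)" if "j < n" for j
        by (rule Bochner_Integration.integral_cong) (use phig[OF that] space_eq in auto)
      then show ?thesis by simp
    qed
    also have "\<dots> = (\<integral>x. (1 / of_nat n) * (\<Sum>j<n. f x * cnj (g (\<gamma> j x))) \<partial>\<mu>)"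
      using L2_prod[OF f L2_comp[OF g]]
      by (simp add: integral_sum scaleR_conv_of_real)
    also have "\<dots> = L2_inner \<mu> f S"
      unfolding L2_inner_def S_def
      by (simp add: sum_distrib_left algebra_simps)
    finally show ?thesis .
  qed
  define u where "u = (\<lambda>x. T g x + (-1) * S x)"
  have uL2: "u \<in> L2 \<mu>" unfolding u_def by (intro L2_add L2_cmult TL2 SL2)
  have "L2_inner \<mu> u (T g) = L2_inner \<mu> u S" by (rule key[OF uL2])
  then have "(\<integral>x. u x * cnj (T g x) \<partial>\<mu>) - (\<integral>x. u x * cnj (S x) \<partial>\<mu>) = 0"
    unfolding L2_inner_def by simp
  then have "(\<integral>x. u x * cnj (T g x) - u x * cnj (S x) \<partial>\<mu>) = 0"
    using L2_prod[OF uL2 TL2] L2_prod[OF uL2 SL2] by simp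
  then have "(\<integral>x. u x * cnj (u x) \<partial>\<mu>) = 0"
    unfolding u_def by (simp add: algebra_simps)
  then have "(\<integral>x. complex_of_real ((cmod (u x))\<^sup>2) \<partial>\<mu>) = 0"
    unfolding complex_norm_square .
  then have "(\<integral>x. (cmod (u x))\<^sup>2 \<partial>\<mu>) = 0"
    by (metis integral_complex_of_real of_real_eq_0_iff)
  then have "AE x in \<mu>. (cmod (u x))\<^sup>2 = 0"
    using integral_nonneg_eq_0_iff_AE[of \<mu> "\<lambda>x. (cmod (u x))\<^sup>2"] uL2 unfolding L2_def by auto
  then show ?thesis
    by eventually_elim (simp add: u_def S_def)
qed

end



theorem lemma4p4:
  fixes K :: "'a::metric_space set" and n :: nat and \<gamma> :: "nat \<Rightarrow> 'a \<Rightarrow> 'a"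
    and \<phi> :: "'a \<Rightarrow> 'a" and \<mu> :: "'a measure"
    and a :: "'a \<Rightarrow> complex" and m :: nat and \<xi> \<eta> :: "nat \<Rightarrow> 'a \<Rightarrow> complex"
    and T :: "('a \<Rightarrow> complex) \<Rightarrow> ('a \<Rightarrow> complex)"
  assumes "compact K"
    and "\<forall>i<n. proper_contraction K (\<gamma> i)"
    and "K = (\<Union>i<n. \<gamma> i ` K)"
    and "continuous_on K \<phi>" and "\<phi> ` K \<subseteq> K"
    and "\<forall>i<n. \<forall>x\<in>K. \<phi> (\<gamma> i x) = x"
    and "open_set_condition K n \<gamma>"
    and "measure_separation_condition K n \<gamma>"
    and "hutchinson_measure K n \<gamma> \<mu>"
    and "a \<in> JX0 K n \<gamma>"
    and "\<forall>i<m. continuous_on K (\<xi> i) \<and> continuous_on K (\<eta> i)"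
    and "\<forall>\<zeta>. continuous_on K \<zeta> \<longrightarrow>
           (\<forall>x\<in>K. (\<Sum>i<m. theta n \<gamma> \<phi> (\<xi> i) (\<eta> i) \<zeta> x) = left_act a \<zeta> x)"
    and "is_comp_adjoint \<mu> \<phi> T"
  shows "\<forall>h\<in>L2 \<mu>. AE x in \<mu>.
           (\<Sum>i<m. \<xi> i x * T (\<lambda>y. cnj (\<eta> i y) * h y) (\<phi> x)) = a x * h x"
  proof -
  note hut = assms(9)[unfolded hutchinson_measure_def self_similar_measure_def]
  have prob: "prob_space \<mu>" and sets_eq: "sets \<mu> = sets (restrict_space borel K)"
    and ident0: "\<forall>E\<in>sets \<mu>. measure \<mu> E = (\<Sum>i<n. 1 / real n * measure \<mu> (\<gamma> i -` E \<inter> K))"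
    using hut by auto
  have spK: "space \<mu> = K"
    using sets_eq_imp_space_eq[OF sets_eq] by (simp add: space_restrict_space)
  have npos: "0 < n"
  proof (rule ccontr)
    assume "\<not> 0 < n"
    then have "K = {}" using assms(3) by simp
    then show False using prob_space.not_empty[OF prob] spK by simp
  qed
  have contmeas: "f \<in> measurable \<mu> \<mu>" if "continuous_on K f" "f ` K \<subseteq> K" for f
  proof -
    have "f \<in> restrict_space borel K \<rightarrow>\<^sub>M borel"
      by (rule borel_measurable_continuous_on_restrict[OF that(1)])
    then have "f \<in> restrict_space borel K \<rightarrow>\<^sub>M restrict_space borel K"
      using that(2) by (intro measurable_restrict_space2) (auto simp: space_restrict_space)
    then show ?thesis using measurable_cong_sets[OF sets_eq sets_eq] by blast
  qed
  have gmeas: "\<And>i. i < n \<Longrightarrow> \<gamma> i \<in> measurable \<mu> \<mu>"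
    using assms(2) contmeas unfolding proper_contraction_def by blast
  have phimeas: "\<phi> \<in> measurable \<mu> \<mu>" using contmeas assms(4,5) by blast
  interpret ssm_phi K n \<gamma> \<mu> \<phi>
    by (rule ssm_phi.intro[OF ssm.intro[OF prob sets_eq npos gmeas] ssm_phi_axioms.intro[OF phimeas]])
      (use ident0 assms(6) in blast)+
  show ?thesis
  proof
    fix h assume h: "h \<in> L2 \<mu>"
    define g where "g = (\<lambda>i y. cnj (\<eta> i y) * h y)"
    have gL2: "g i \<in> L2 \<mu>" if i: "i < m" for i
    proof -
      have ci: "continuous_on K (\<eta> i)" using assms(11) i by blast
      have "bounded (\<eta> i ` K)" by (rule compact_imp_bounded[OF compact_continuous_image[OF ci assms(1)]])
      then obtain B where B: "\<And>x. x \<in> K \<Longrightarrow> cmod (\<eta> i x) \<le> B" unfolding bounded_iff by blast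
      have "\<eta> i \<in> borel_measurable (restrict_space borel K)"
        by (rule borel_measurable_continuous_on_restrict[OF ci])
      then have "\<eta> i \<in> borel_measurable \<mu>" using measurable_cong_sets[OF sets_eq refl] by blast
      then have "(\<lambda>y. cnj (\<eta> i y)) \<in> borel_measurable \<mu>" by (rule cnj_meas)
      then show ?thesis unfolding g_def
        by (rule L2_bmult[OF h, of _ B]) (use B spK in auto)
    qed
    have AEi: "AE x in \<mu>. T (g i) (\<phi> x) = (1 / of_nat n) * (\<Sum>j<n. g i (\<gamma> j (\<phi> x)))" if i: "i < m" for i
    proof (rule AE_phi[where P="\<lambda>y. T (g i) y = (1 / of_nat n) * (\<Sum>j<n. g i (\<gamma> j y))"])
      show "AE y in \<mu>. T (g i) y = (1 / of_nat n) * (\<Sum>j<n. g i (\<gamma> j y))"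
        by (rule adj[OF assms(13) gL2[OF i]])
      have "T (g i) \<in> borel_measurable \<mu>"
        using assms(13) gL2[OF i] unfolding is_comp_adjoint_def L2_def by blast
      moreover have "(\<lambda>y. (1 / of_nat n) * (\<Sum>j<n. g i (\<gamma> j y))) \<in> L2 \<mu>"
        by (intro L2_cmult L2_sum L2_comp gL2[OF i]) auto
      then have "(\<lambda>y. (1 / of_nat n) * (\<Sum>j<n. g i (\<gamma> j y))) \<in> borel_measurable \<mu>"
        unfolding L2_def by blast
      ultimately show "{y \<in> space \<mu>. T (g i) y = (1 / of_nat n) * (\<Sum>j<n. g i (\<gamma> j y))} \<in> sets \<mu>"
        by (rule measurable_equality_set)
    qed
    have "AE x in \<mu>. \<forall>i\<in>{..<m}. T (g i) (\<phi> x) = (1 / of_nat n) * (\<Sum>j<n. g i (\<gamma> j (\<phi> x)))"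
      by (rule AE_finite_allI) (use AEi in auto)
    moreover have "AE x in \<mu>. x \<in> K" by (rule AE_I2) (simp add: spK)
    ultimately show "AE x in \<mu>. (\<Sum>i<m. \<xi> i x * T (\<lambda>y. cnj (\<eta> i y) * h y) (\<phi> x)) = a x * h x"
    proof eventually_elim
      case (elim x)
      define P where "P = insert x ((\<lambda>j. \<gamma> j (\<phi> x)) ` {..<n})"
      obtain \<zeta> where zc: "continuous_on UNIV \<zeta>" and zP: "\<forall>p\<in>P. \<zeta> p = h p"
        using interp[of P h] unfolding P_def by auto
      have "continuous_on K \<zeta>" using zc continuous_on_subset by blast
      then have "(\<Sum>i<m. theta n \<gamma> \<phi> (\<xi> i) (\<eta> i) \<zeta> x) = left_act a \<zeta> x"
        using assms(12) elim(2) by blast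
      then have "(\<Sum>i<m. \<xi> i x * ((1 / of_nat n) * (\<Sum>j<n. cnj (\<eta> i (\<gamma> j (\<phi> x))) * \<zeta> (\<gamma> j (\<phi> x))))) = a x * \<zeta> x"
        unfolding theta_def right_act_def bimod_inner_def left_act_def by simp
      moreover have "\<zeta> x = h x" using zP unfolding P_def by simp
      moreover have "\<zeta> (\<gamma> j (\<phi> x)) = h (\<gamma> j (\<phi> x))" if "j < n" for j
        using zP that unfolding P_def by simp
      ultimately have F1: "(\<Sum>i<m. \<xi> i x * ((1 / of_nat n) * (\<Sum>j<n. cnj (\<eta> i (\<gamma> j (\<phi> x))) * h (\<gamma> j (\<phi> x))))) = a x * h x"
        by simp
      have F2: "T (\<lambda>y. cnj (\<eta> i y) * h y) (\<phi> x) = (1 / of_nat n) * (\<Sum>j<n. cnj (\<eta> i (\<gamma> j (\<phi> x))) * h (\<gamma> j (\<phi> x)))"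
        if "i < m" for i
        using elim(1) that unfolding g_def by simp
      have "(\<Sum>i<m. \<xi> i x * T (\<lambda>y. cnj (\<eta> i y) * h y) (\<phi> x)) =
          (\<Sum>i<m. \<xi> i x * ((1 / of_nat n) * (\<Sum>j<n. cnj (\<eta> i (\<gamma> j (\<phi> x))) * h (\<gamma> j (\<phi> x)))))"
        by (rule sum.cong[OF refl]) (simp only: F2 lessThan_iff)
      then show ?case using F1 by simp
    qed
  qed
qed

end
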